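(* Let $\mathbf a=(a_i)_{i\ge0}$ be the fixed point beginning with $0$ of the $3$-uniform morphism $\sigma$ on $\{0,1,2\}$ defined by $\sigma(0)=010$, $\sigma(1)=102$, $\sigma(2)=122$, with letters viewed as elements of $\mathbb{F}_3$, and let $f_{\mathbf a}(T)=\sum_{i\ge0}a_iT^{-i}\in\mathbb{F}_3[[T^{-1}]]$. Then $$2.66\le\mu(f_{\mathbf a})\le2.81.$$
   Context: The fixed point is $\sigma^\infty(0)=\lim_n\sigma^n(0)=010102010\cdots$. Fix a real $|T|>1$; $|g|=|T|^{-i_0}$ for $g\in\mathbb{F}_3((T^{-1}))$ with leading term $T^{-i_0}$. The irrationality exponent $\mu(f)$ is the supremum of real $\tau$ such that $|f-P/Q|<|Q|^{-\tau}$ has infinitely many solutions $(P,Q)\in\mathbb{F}_3[T]^2$, $Q\ne0$. *)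

theory Defs
  imports "HOL-Computational_Algebra.Formal_Laurent_Series"
          "HOL-Computational_Algebra.Polynomial"
          "HOL-Library.Extended_Real"
          "Berlekamp_Zassenhaus.Finite_Field"
begin

text \<open>A three-element index type; F_3 is the library field  three mod_ring.\<close>
datatype three = Three0 | Three1 | Three2

lemma UNIV_three: "(UNIV :: three set) = {Three0, Three1, Three2}"
  using three.exhaust by auto

instance three :: finite
  by standard (simp add: UNIV_three)

lemma card_three: "CARD(three) = 3"
  by (simp add: UNIV_three)

instance three :: prime_card
  by standard (simp add: card_three)

type_synonym F3 = "three mod_ring"

fun sigma :: "nat \<Rightarrow> nat list" where
  "sigma 0 = [0, 1, 0]"
| "sigma (Suc 0) = [1, 0, 2]"
| "sigma _ = [1, 2, 2]"

definition sigma_word :: "nat list \<Rightarrow> nat list" where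
  "sigma_word w = concat (map sigma w)"

text \<open>The fixed point sigma^infinity(0) = lim sigma^n(0): its i-th letter is the i-th letter
  of sigma^(i+1)(0), a word of length 3^(i+1) > i which is a prefix of all later iterates.\<close>
definition fixpt :: "nat \<Rightarrow> nat" where
  "fixpt i = ((sigma_word ^^ Suc i) [0]) ! i"

text \<open>An element  sum_k c_k T^k  of F_3((T^-1)) is represented by the formal Laurent
  series  sum_k c_k X^(-k)  (finitely many negative powers of X).\<close>

definition poly_T :: "F3 poly \<Rightarrow> F3 fls" where
  "poly_T P = Abs_fls (\<lambda>k. if k \<le> 0 then Polynomial.coeff P (nat (- k)) else 0)"

definition f_a :: "F3 fls" where
  "f_a = fps_to_fls (Abs_fps (\<lambda>i. of_nat (fixpt i)))"

text \<open>|g| = t^(-i0) where T^(-i0) is the leading term of g (i0 = subdegree in X); |0| = 0.\<close>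
definition absT :: "real \<Rightarrow> F3 fls \<Rightarrow> real" where
  "absT t g = (if g = 0 then 0 else t powr (- real_of_int (fls_subdegree g)))"

definition irr_exp :: "real \<Rightarrow> F3 fls \<Rightarrow> ereal" where
  "irr_exp t f = Sup (ereal ` {\<tau>. infinite {(P, Q). Q \<noteq> 0 \<and>
      absT t (f - poly_T P / poly_T Q) < absT t (poly_T Q) powr (- \<tau>)}})"

end

theory Submission
  imports Defs
begin


section \<open>Part 1: the fixed point\<close>

lemma length_sigma [simp]: "length (sigma x) = 3"
  by (cases x rule: sigma.cases) auto

lemma sigma_word_Cons [simp]: "sigma_word (x # w) = sigma x @ sigma_word w"
  by (simp add: sigma_word_def)

lemma sigma_word_Nil [simp]: "sigma_word [] = []"
  by (simp add: sigma_word_def)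

lemma length_sigma_word [simp]: "length (sigma_word w) = 3 * length w"
  by (induct w) auto

lemma sigma_word_nth:
  assumes "i < length w" "j < 3"
  shows "sigma_word w ! (3 * i + j) = sigma (w ! i) ! j"
  using assms
proof (induct w arbitrary: i)
  case Nil then show ?case by simp
next
  case (Cons x w)
  show ?case
  proof (cases i)
    case 0 then show ?thesis using Cons by (simp add: nth_append)
  next
    case (Suc i')
    have "3 * i + j = 3 + (3 * i' + j)" using Suc by simp
    then show ?thesis using Cons Suc by (simp add: nth_append)
  qed
qed

lemma length_iter [simp]: "length ((sigma_word ^^ k) [0]) = 3 ^ k"
  by (induct k) auto

lemma iter_Suc_nth:
  "i < 3 ^ k \<Longrightarrow> (sigma_word ^^ Suc k) [0] ! i = (sigma_word ^^ k) [0] ! i"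
proof (induct k arbitrary: i)
  case 0 then show ?case by simp
next
  case (Suc k)
  define q where "q = i div 3"
  define j where "j = i mod 3"
  have i: "i = 3 * q + j" and j: "j < 3" unfolding q_def j_def by auto
  have q: "q < 3 ^ k" using Suc.prems unfolding q_def by auto
  have "(sigma_word ^^ Suc (Suc k)) [0] ! i = sigma_word ((sigma_word ^^ Suc k) [0]) ! (3 * q + j)"
    using i by simp
  also have "\<dots> = sigma ((sigma_word ^^ Suc k) [0] ! q) ! j"
    using q j by (intro sigma_word_nth) auto
  also have "\<dots> = sigma ((sigma_word ^^ k) [0] ! q) ! j" using Suc.hyps q by simp
  also have "\<dots> = sigma_word ((sigma_word ^^ k) [0]) ! (3 * q + j)"
    using q j by (intro sigma_word_nth[symmetric]) auto
  finally show ?case using i by simp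
qed

lemma iter_mono_nth:
  "i < 3 ^ k \<Longrightarrow> k \<le> m \<Longrightarrow> (sigma_word ^^ m) [0] ! i = (sigma_word ^^ k) [0] ! i"
proof (induct m)
  case 0 then show ?case by simp
next
  case (Suc m)
  show ?case
  proof (cases "k = Suc m")
    case False
    then have "k \<le> m" using Suc by simp
    moreover have "i < 3 ^ m" using Suc.prems \<open>k \<le> m\<close>
      by (meson less_le_trans one_le_numeral power_increasing)
    ultimately show ?thesis using Suc iter_Suc_nth by simp
  qed simp
qed

lemma lt_pow3: "i < (3::nat) ^ Suc i"
proof -
  have "i < 2 ^ i" by (rule less_exp)
  also have "\<dots> \<le> 3 ^ i" by (rule power_mono) auto
  also have "\<dots> \<le> 3 ^ Suc i" by simp
  finally show ?thesis .
qed

lemma fixpt_iter: "i < 3 ^ m \<Longrightarrow> fixpt i = (sigma_word ^^ m) [0] ! i"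
  unfolding fixpt_def
  by (metis iter_mono_nth lt_pow3 nat_le_linear)

lemma fixpt_rec: "fixpt i = sigma (fixpt (i div 3)) ! (i mod 3)"
proof -
  define q where "q = i div 3"
  define j where "j = i mod 3"
  have i: "i = 3 * q + j" and j: "j < 3" unfolding q_def j_def by auto
  have qi: "q \<le> i" unfolding q_def by simp
  have q: "q < 3 ^ Suc i" using lt_pow3[of i] qi by simp
  have "fixpt i = (sigma_word ^^ Suc (Suc i)) [0] ! i"
    by (rule fixpt_iter) (meson lt_pow3 less_le_trans one_le_numeral power_increasing le_SucI order_refl)
  also have "\<dots> = sigma_word ((sigma_word ^^ Suc i) [0]) ! (3 * q + j)" using i by simp
  also have "\<dots> = sigma ((sigma_word ^^ Suc i) [0] ! q) ! j"
    using q j by (intro sigma_word_nth) auto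
  also have "(sigma_word ^^ Suc i) [0] ! q = fixpt q" by (rule fixpt_iter[OF q, symmetric])
  finally show ?thesis unfolding q_def j_def .
qed

lemma fixpt_3: "j < 3 \<Longrightarrow> fixpt (3 * i + j) = sigma (fixpt i) ! j"
  by (subst fixpt_rec) simp

lemma fixpt_0 [simp]: "fixpt 0 = 0"
  by (simp add: fixpt_def)

lemma sigma_lt3: "j < 3 \<Longrightarrow> sigma x ! j < 3"
  by (cases x rule: sigma.cases; cases j; auto simp: less_Suc_eq numeral_3_eq_3)

lemma fixpt_lt3: "fixpt i < 3"
  by (subst fixpt_rec) (simp add: sigma_lt3)

lemma sigma_2 [simp]: "sigma 2 = [1,2,2]"
  by (simp add: numeral_2_eq_2)

lemma fixpt_table:
  "fixpt 1 = 1" "fixpt 2 = 0" "fixpt 3 = 1" "fixpt 4 = 0" "fixpt 5 = 2" "fixpt 6 = 0"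
  "fixpt 7 = 1" "fixpt 8 = 0" "fixpt 9 = 1" "fixpt 10 = 0" "fixpt 11 = 2" "fixpt 12 = 0"
  "fixpt 13 = 1" "fixpt 14 = 0" "fixpt 15 = 1" "fixpt 16 = 2"
proof -
  show 1: "fixpt 1 = 1" using fixpt_rec[of 1] by simp
  show 2: "fixpt 2 = 0" using fixpt_rec[of 2] by simp
  show 3: "fixpt 3 = 1" using fixpt_rec[of 3] 1 by simp
  show 4: "fixpt 4 = 0" using fixpt_rec[of 4] 1 by simp
  show 5: "fixpt 5 = 2" using fixpt_rec[of 5] 1 by simp
  show 6: "fixpt 6 = 0" using fixpt_rec[of 6] 2 by simp
  show 7: "fixpt 7 = 1" using fixpt_rec[of 7] 2 by simp
  show 8: "fixpt 8 = 0" using fixpt_rec[of 8] 2 by simp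
  show 9: "fixpt 9 = 1" using fixpt_rec[of 9] 3 by simp
  show 10: "fixpt 10 = 0" using fixpt_rec[of 10] 3 by simp
  show 11: "fixpt 11 = 2" using fixpt_rec[of 11] 3 by simp
  show 12: "fixpt 12 = 0" using fixpt_rec[of 12] 4 by simp
  show 13: "fixpt 13 = 1" using fixpt_rec[of 13] 4 by simp
  show 14: "fixpt 14 = 0" using fixpt_rec[of 14] 4 by simp
  show 15: "fixpt 15 = 1" using fixpt_rec[of 15] 5 by simp
  show 16: "fixpt 16 = 2" using fixpt_rec[of 16] 5 by simp
qed

lemma period:
  "(\<forall>m. 1 \<le> m \<and> m < 10*3^k \<longrightarrow> fixpt (m + 6*3^k) = fixpt m) \<and> fixpt (10*3^k) = 0
   \<and> fixpt (10*3^k + 6*3^k) \<noteq> 0 \<and> fixpt (6*3^k) = 0"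
proof (induct k)
  case 0
  have "\<forall>m. 1 \<le> m \<and> m < 10 \<longrightarrow> fixpt (m + 6) = fixpt m"
  proof (intro allI impI)
    fix m :: nat assume "1 \<le> m \<and> m < 10"
    then have "m \<in> {1,2,3,4,5,6,7,8,9}" by auto
    then show "fixpt (m + 6) = fixpt m" using fixpt_table by (auto simp del: One_nat_def)
  qed
  then show ?case by (simp add: fixpt_table)
next
  case (Suc k)
  define N :: nat where "N = 6*3^k"
  define r :: nat where "r = 10*3^k"
  have IH: "\<And>m. 1 \<le> m \<Longrightarrow> m < r \<Longrightarrow> fixpt (m + N) = fixpt m"
    and r0: "fixpt r = 0" and rN: "fixpt (r + N) \<noteq> 0" and N0: "fixpt N = 0"
    using Suc unfolding N_def r_def by auto
  have e1: "6*3^Suc k = 3 * N" and e2: "10*3^Suc k = 3 * r" unfolding N_def r_def by simp_all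
  have A: "fixpt (3 * N) = 0" using fixpt_3[of 0 N] N0 by simp
  have B: "fixpt (3 * r) = 0" using fixpt_3[of 0 r] r0 by simp
  have C: "fixpt (3 * r + 3 * N) \<noteq> 0"
  proof -
    have "fixpt (3 * (r + N) + 0) = sigma (fixpt (r + N)) ! 0" by (rule fixpt_3) simp
    moreover have "fixpt (r + N) \<noteq> 0" by (rule rN)
    ultimately show ?thesis by (cases "fixpt (r+N)" rule: sigma.cases) (auto simp: algebra_simps)
  qed
  have D: "fixpt (m + 3 * N) = fixpt m" if m: "1 \<le> m" "m < 3 * r" for m
  proof -
    define i where "i = m div 3"
    define j where "j = m mod 3"
    have mi: "m = 3 * i + j" and j: "j < 3" unfolding i_def j_def by auto
    have e: "m + 3 * N = 3 * (i + N) + j" using mi by simp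
    have L: "fixpt (m + 3 * N) = sigma (fixpt (i + N)) ! j" unfolding e by (rule fixpt_3[OF j])
    have R: "fixpt m = sigma (fixpt i) ! j" using fixpt_3[OF j] mi by simp
    show ?thesis
    proof (cases "i = 0")
      case True then show ?thesis using L R N0 by simp
    next
      case False
      have "i < r" using m mi j by linarith
      then show ?thesis using L R IH[of i] False by simp
    qed
  qed
  show ?case unfolding e1 e2 using A B C D by auto
qed


lemma F3_of_nat_mod: "(of_nat n :: F3) = of_nat (n mod 3)"
  using of_nat_mod_CHAR[where 'a=F3, of n] by (simp add: card_three)
lemma F3_3: "(3::F3) = 0"
proof -
  have "(of_nat 3 :: F3) = of_nat (3 mod 3)" by (rule F3_of_nat_mod)
  then show ?thesis by simp
qed
lemma F3_nums: "(4::F3) = 1" "(5::F3) = 2" "(6::F3) = 0"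
  "(-1::F3) = 2" "(-2::F3) = 1" "(2::F3) \<noteq> 0" "(1::F3) \<noteq> 2"
proof -
  have a: "(4::F3) = 3 + 1" "(5::F3) = 3 + 2" "(6::F3) = 3 + 3" by simp_all
  show "(4::F3) = 1" "(5::F3) = 2" "(6::F3) = 0" unfolding a F3_3 by simp_all
  have b: "(2::F3) + 1 = 3" by simp
  show "(-1::F3) = 2" using b unfolding F3_3 by (simp add: eq_neg_iff_add_eq_0)
  show "(-2::F3) = 1" using b unfolding F3_3 by (simp add: eq_neg_iff_add_eq_0 add.commute)
  show "(2::F3) \<noteq> 0"
  proof
    assume "(2::F3) = 0"
    then have "(of_nat 2 :: F3) = 0" by simp
    then have "CHAR(F3) dvd 2" by (simp only: of_nat_eq_0_iff_char_dvd)
    then show False by (simp add: card_three)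
  qed
  show "(1::F3) \<noteq> 2"
  proof
    assume "(1::F3) = 2"
    then have "(1::F3) - 1 = 2 - 1" by simp
    then have "(1::F3) = 0" by simp
    then show False by simp
  qed
qed
definition aa :: "nat \<Rightarrow> F3" where "aa i = of_nat (fixpt i)"

lemma fixpt_cases: "fixpt i = 0 \<or> fixpt i = 1 \<or> fixpt i = 2"
  using fixpt_lt3[of i] by auto

lemma aa_triple:
  "aa (3*i) + aa (3*i+1) + aa (3*i+2) = 1 - aa i"
  "aa (3*i) - aa (3*i+1) + aa (3*i+2) = aa i - 1"
proof -
  have e: "aa (3*i+j) = of_nat (sigma (fixpt i) ! j)" if "j < 3" for j
    unfolding aa_def using fixpt_3[OF that] by simp
  have e0: "aa (3*i) = of_nat (sigma (fixpt i) ! 0)" using e[of 0] by simp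
  have e1: "aa (3*i+1) = of_nat (sigma (fixpt i) ! 1)" by (rule e) simp
  have e2: "aa (3*i+2) = of_nat (sigma (fixpt i) ! 2)" by (rule e) simp
  have ai: "aa i = of_nat (fixpt i)" by (simp add: aa_def)
  have c: "(1::F3) + 2 + 2 = 1 - 2" "(1::F3) + 0 + 2 = 1 - 1" "(0::F3) + 1 + 0 = 1 - 0"
    "(1::F3) - 2 + 2 = 2 - 1" "(1::F3) - 0 + 2 = 1 - 1" "(0::F3) - 1 + 0 = 0 - 1"
  proof -
    have "(1::F3) + 2 + 2 = 5" by simp
    also have "\<dots> = -1" using F3_nums(2,4) by simp
    also have "\<dots> = 1 - 2" by simp
    finally show "(1::F3) + 2 + 2 = 1 - 2" .
    show "(1::F3) + 0 + 2 = 1 - 1" using F3_3 by simp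
    show "(0::F3) + 1 + 0 = 1 - 0" by simp
    show "(1::F3) - 2 + 2 = 2 - 1" by simp
    show "(1::F3) - 0 + 2 = 1 - 1" using F3_3 by simp
    show "(0::F3) - 1 + 0 = 0 - 1" by simp
  qed
  show "aa (3*i) + aa (3*i+1) + aa (3*i+2) = 1 - aa i"
    unfolding e0 e1 e2 ai using fixpt_cases[of i]
  proof (elim disjE)
  qed (simp_all add: c F3_3 F3_nums(3))
  show "aa (3*i) - aa (3*i+1) + aa (3*i+2) = aa i - 1"
    unfolding e0 e1 e2 ai using fixpt_cases[of i]
  proof (elim disjE)
  qed (simp_all add: c F3_3 F3_nums(3))
qed

lemma sum3: "(\<Sum>j<3*(M::nat). f j) = (\<Sum>i<M. f (3*i) + f (3*i+1) + f (3*i+2))"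
proof (induct M)
  case 0 then show ?case by simp
next
  case (Suc M)
  have e: "3 * Suc M = Suc (Suc (Suc (3*M)))" by simp
  show ?case unfolding e using Suc by (simp add: algebra_simps)
qed

definition SS :: "nat \<Rightarrow> F3" where "SS M = (\<Sum>j<M. aa j)"
definition AL :: "nat \<Rightarrow> F3" where "AL M = (\<Sum>j<M. (-1)^j * aa j)"

lemma SS_3: "SS (3*M) = of_nat M - SS M"
proof -
  have "SS (3*M) = (\<Sum>i<M. 1 - aa i)" unfolding SS_def sum3 aa_triple(1) ..
  also have "\<dots> = of_nat M - SS M" by (simp add: sum_subtractf SS_def)
  finally show ?thesis .
qed

lemma AL_3: "AL (3*M) = AL M - (\<Sum>i<M. (-1)^i)"
proof -
  have "AL (3*M) = (\<Sum>i<M. (-1)^i * (aa (3*i) - aa (3*i+1) + aa (3*i+2)))"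
    unfolding AL_def sum3
  proof (rule sum.cong[OF refl])
    fix i
    have p: "(-1::F3)^(3*i) = (-1)^i" by (simp add: power_mult)
    show "(-1::F3) ^ (3 * i) * aa (3 * i) + (-1) ^ (3 * i + 1) * aa (3 * i + 1) +
          (-1) ^ (3 * i + 2) * aa (3 * i + 2) = (-1) ^ i * (aa (3 * i) - aa (3 * i + 1) + aa (3 * i + 2))"
      unfolding power_add p by (simp add: algebra_simps)
  qed
  also have "\<dots> = (\<Sum>i<M. (-1)^i * aa i - (-1)^i)" unfolding aa_triple(2)
    by (simp add: algebra_simps)
  also have "\<dots> = AL M - (\<Sum>i<M. (-1)^i)" by (simp add: sum_subtractf AL_def)
  finally show ?thesis .
qed

lemma alt_sum_even: "(\<Sum>i<2*n. (-1::F3)^i) = 0"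
proof (induct n)
  case (Suc n)
  have e: "2 * Suc n = Suc (Suc (2*n))" by simp
  show ?case unfolding e using Suc by simp
qed simp

lemma aa_small: "aa 0 = 0" "aa (Suc 0) = 1" "aa 2 = 0"
  using fixpt_table(1,2) by (simp_all add: aa_def)

lemma of_nat_6_pow: "(of_nat (6*3^k) :: F3) = 0"
proof -
  have "(of_nat (6*3^k) :: F3) = 3 * of_nat (2*3^k)" by simp
  then show ?thesis by (simp add: F3_3)
qed

lemma SS_N: "SS (6*3^k) = 1 \<or> SS (6*3^k) = -1"
proof (induct k)
  case 0
  have "SS 6 = SS (3*2)" by simp
  also have "\<dots> = 2 - SS 2" unfolding SS_3 by simp
  also have "SS 2 = 1" by (simp add: SS_def numeral_2_eq_2 aa_small)
  finally show ?case by simp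
next
  case (Suc k)
  have "SS (6*3^Suc k) = SS (3*(6*3^k))" by (simp add: algebra_simps)
  also have "\<dots> = - SS (6*3^k)" unfolding SS_3 of_nat_6_pow by simp
  finally show ?case using Suc by auto
qed

lemma AL_N: "AL (6*3^k) = -1"
proof (induct k)
  case 0
  have "AL 6 = AL (3*2)" by simp
  also have "\<dots> = AL 2 - (\<Sum>i<2. (-1)^i)" unfolding AL_3 by simp
  also have "(\<Sum>i<2. (-1::F3)^i) = 0" using alt_sum_even[of 1] by simp
  also have "AL 2 = -1" by (simp add: AL_def numeral_2_eq_2 aa_small)
  finally show ?case by simp
next
  case (Suc k)
  have "AL (6*3^Suc k) = AL (3*(6*3^k))" by (simp add: algebra_simps)
  also have "\<dots> = AL (6*3^k) - (\<Sum>i<2*(3*3^k). (-1)^i)" unfolding AL_3 by (simp add: algebra_simps)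
  also have "(\<Sum>i<2*(3*3^k). (-1::F3)^i) = 0" by (rule alt_sum_even)
  finally show ?case using Suc by simp
qed



definition pp :: "nat \<Rightarrow> F3 poly" where
  "pp N = Poly (map (\<lambda>i. aa (N - i)) [0..<Suc N])"

lemma coeff_pp: "Polynomial.coeff (pp N) i = (if i \<le> N then aa (N - i) else 0)"
  by (auto simp: pp_def nth_default_def simp del: upt_Suc)

lemma degree_pp: "degree (pp N) \<le> N"
  by (rule degree_le) (simp add: coeff_pp)

lemma poly_le_sum:
  fixes p :: "F3 poly"
  assumes "degree p \<le> N" shows "poly p x = (\<Sum>i\<le>N. Polynomial.coeff p i * x ^ i)"
proof -
  have "poly p x = (\<Sum>i\<le>degree p. Polynomial.coeff p i * x ^ i)" by (rule poly_altdef)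
  also have "\<dots> = (\<Sum>i\<le>N. Polynomial.coeff p i * x ^ i)"
    by (rule sum.mono_neutral_left) (use assms in \<open>auto simp: coeff_eq_0\<close>)
  finally show ?thesis .
qed

lemma poly_pp_1: "poly (pp N) 1 = SS (Suc N)"
proof -
  have "poly (pp N) 1 = (\<Sum>i\<in>{0..N}. aa (N - i))"
    by (simp add: poly_le_sum[OF degree_pp] coeff_pp atLeast0AtMost)
  also have "\<dots> = (\<Sum>i\<in>{0..N}. aa i)"
    by (subst sum.atLeastAtMost_rev) simp
  also have "\<dots> = SS (Suc N)" by (simp add: SS_def atLeast0AtMost lessThan_Suc_atMost)
  finally show ?thesis .
qed

lemma poly_pp_m1: assumes "even N" shows "poly (pp N) (-1) = AL (Suc N)"
proof -
  have "poly (pp N) (-1) = (\<Sum>i\<in>{0..N}. aa (N - i) * (-1)^i)"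
    by (simp add: poly_le_sum[OF degree_pp] coeff_pp atLeast0AtMost)
  also have "\<dots> = (\<Sum>i\<in>{0..N}. aa i * (-1)^(N - i))"
    by (subst sum.atLeastAtMost_rev) simp
  also have "\<dots> = (\<Sum>i\<in>{0..N}. (-1)^i * aa i)"
  proof (rule sum.cong[OF refl])
    fix i assume "i \<in> {0..N}"
    then have "even (N - i) = even i" using assms by auto
    then show "aa i * (-1::F3)^(N - i) = (-1)^i * aa i"
      by (simp add: minus_one_power_iff)
  qed
  also have "\<dots> = AL (Suc N)" by (simp add: AL_def atLeast0AtMost lessThan_Suc_atMost)
  finally show ?thesis .
qed

lemma aa_N: "aa (6*3^k) = 0"
  using period[of k] by (simp add: aa_def)

lemma coprime_lin:
  fixes p :: "F3 poly"
  assumes "poly p c \<noteq> 0" shows "coprime [:-c, 1:] p"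
proof -
  have "prime_elem [:-c, 1:]" by (rule prime_elem_linear_field_poly) simp
  moreover have "\<not> [:-c, 1:] dvd p" using assms by (simp add: poly_eq_0_iff_dvd)
  ultimately show ?thesis by (rule prime_elem_imp_coprime)
qed

definition qq :: "nat \<Rightarrow> F3 poly" where "qq N = Polynomial.monom 1 N - 1"

lemma cube_diff: "((x::'a::comm_ring_1) - 1)^3 = x^3 - 3*x^2 + 3*x - 1"
  by (simp add: power3_eq_cube power2_eq_square algebra_simps)

lemma poly3: "(3 :: F3 poly) = 0"
  by (simp add: numeral_poly F3_3)

lemma frob: "(Polynomial.monom (1::F3) M - 1)^3 = Polynomial.monom 1 (3*M) - 1"
  unfolding cube_diff poly3 by (simp add: monom_power mult.commute)

lemma qq_pow: "qq (2*3^n) = ([:-1,1:] * [:1,1:])^(3^n)"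
proof (induct n)
  case 0
  have "qq 2 = [:-1,0,1:]"
    by (rule poly_eqI) (auto simp: qq_def coeff_monom coeff_pCons split: nat.splits)
  then show ?case by simp
next
  case (Suc n)
  have "qq (2*3^Suc n) = (qq (2*3^n))^3" unfolding qq_def frob by (simp add: algebra_simps)
  also have "\<dots> = ([:-1,1:] * [:1,1:])^(3^Suc n)" unfolding Suc by (simp add: power_mult[symmetric] algebra_simps)
  finally show ?case .
qed

lemma coprime_pp_qq: "coprime (qq (6*3^k)) (pp (6*3^k))"
proof -
  define N :: nat where "N = 6*3^k"
  have ev: "even N" unfolding N_def by simp
  have aN: "aa N = 0" unfolding N_def by (rule aa_N)
  have p1: "poly (pp N) 1 \<noteq> 0"
    unfolding poly_pp_1 using SS_N[of k] aN by (auto simp: SS_def N_def[symmetric])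
  have p2: "poly (pp N) (-1) \<noteq> 0"
    unfolding poly_pp_m1[OF ev] using AL_N[of k] aN by (auto simp: AL_def N_def[symmetric])
  have c1: "coprime [:-1,1:] (pp N)" using coprime_lin[OF p1] by simp
  have c2: "coprime [:1,1:] (pp N)" using coprime_lin[OF p2] by simp
  have "N = 2*3^Suc k" unfolding N_def by simp
  then have "qq N = ([:-1,1:] * [:1,1:])^(3^Suc k)" using qq_pow[of "Suc k"] by (simp only:)
  moreover have "coprime ([:-1,1:] * [:1,1:]) (pp N)" using c1 c2 by (simp only: coprime_mult_left_iff)
  then have "coprime (([:-1,1:] * [:1,1:])^(3^Suc k)) (pp N)" by (simp only: coprime_power_left_iff simp_thms)
  ultimately show ?thesis unfolding N_def[symmetric] by simp
qed

notation fls_nth (infixl \<open>$$\<close> 75)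

lemma poly_T_nth: "poly_T P $$ k = (if k \<le> 0 then Polynomial.coeff P (nat (-k)) else 0)"
  unfolding poly_T_def
  by (rule nth_Abs_fls_lower_bound[of "- int (degree P)"]) (auto simp: coeff_eq_0)

lemma poly_T_0 [simp]: "poly_T 0 = 0"
  by (rule fls_eqI) (simp add: poly_T_nth)

lemma poly_T_add: "poly_T (p + q) = poly_T p + poly_T q"
  by (rule fls_eqI) (simp add: poly_T_nth)

lemma poly_T_diff: "poly_T (p - q) = poly_T p - poly_T q"
  by (rule fls_eqI) (simp add: poly_T_nth)

lemma poly_T_smult: "poly_T (Polynomial.smult a p) = fls_const a * poly_T p"
  by (rule fls_eqI) (simp add: poly_T_nth)

lemma poly_T_const: "poly_T [:a:] = fls_const a"
  by (rule fls_eqI) (auto simp: poly_T_nth coeff_pCons split: nat.splits)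

lemma poly_T_1 [simp]: "poly_T 1 = 1"
  using poly_T_const[of 1] by (simp add: one_pCons)

lemma poly_T_pCons0: "poly_T (pCons 0 p) = fls_X_inv * poly_T p"
  unfolding fls_X_inv_times_conv_shift
proof (rule fls_eqI)
  fix k :: int
  show "poly_T (pCons 0 p) $$ k = fls_shift 1 (poly_T p) $$ k"
  proof (cases "k < 0")
    case True
    then have "nat (-k) = Suc (nat (- (k + 1)))" by simp
    then show ?thesis using True by (simp add: poly_T_nth)
  next
    case False then show ?thesis by (simp add: poly_T_nth)
  qed
qed

lemma poly_T_pCons: "poly_T (pCons a p) = fls_const a + fls_X_inv * poly_T p"
proof -
  have "pCons a p = [:a:] + pCons 0 p" by simp
  then show ?thesis by (simp only: poly_T_add poly_T_const poly_T_pCons0)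
qed

lemma poly_T_mult: "poly_T (p * q) = poly_T p * poly_T q"
proof (induct p)
  case 0 then show ?case by simp
next
  case (pCons a p)
  have "poly_T (pCons a p * q) = poly_T (Polynomial.smult a q + pCons 0 (p * q))" by simp
  also have "\<dots> = fls_const a * poly_T q + fls_X_inv * (poly_T p * poly_T q)"
    by (simp only: poly_T_add poly_T_smult poly_T_pCons0 pCons(2))
  also have "\<dots> = poly_T (pCons a p) * poly_T q"
    by (simp add: poly_T_pCons algebra_simps)
  finally show ?case .
qed

lemma poly_T_eq_0_iff [simp]: "poly_T p = 0 \<longleftrightarrow> p = 0"
proof
  assume "poly_T p = 0"
  have "Polynomial.coeff p n = 0" for n
  proof -
    have "poly_T p $$ (- int n) = Polynomial.coeff p n" by (simp add: poly_T_nth)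
    then show ?thesis using \<open>poly_T p = 0\<close> by simp
  qed
  then show "p = 0" by (simp add: poly_eq_iff)
qed simp

lemma poly_T_subdegree: "p \<noteq> 0 \<Longrightarrow> fls_subdegree (poly_T p) = - int (degree p)"
  by (rule fls_subdegree_eqI) (auto simp: poly_T_nth coeff_eq_0)

lemma poly_T_qq: "poly_T (qq N) = fls_shift (int N) 1 - 1"
  unfolding qq_def poly_T_diff poly_T_1
  by (rule arg_cong[where f="\<lambda>x. x - 1"], rule fls_eqI) (auto simp: poly_T_nth coeff_monom)

lemma degree_qq: "N > 0 \<Longrightarrow> degree (qq N) = N"
proof -
  assume N: "N > 0"
  have "qq N = Polynomial.monom 1 N + (- 1)" unfolding qq_def by simp
  also have "degree \<dots> = degree (Polynomial.monom (1::F3) N)"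
    by (rule degree_add_eq_left) (use N in \<open>simp add: degree_monom_eq\<close>)
  finally show ?thesis by (simp add: degree_monom_eq)
qed

lemma qq_nonzero: "N > 0 \<Longrightarrow> qq N \<noteq> 0"
  using degree_qq[of N] by (metis degree_0 less_numeral_extra(3))

lemma f_a_nth: "f_a $$ m = (if m < 0 then 0 else aa (nat m))"
  by (simp add: f_a_def aa_def)

definition EE :: "nat \<Rightarrow> F3 fls" where
  "EE N = poly_T (qq N) * f_a - poly_T (pp N)"

lemma EE_nth: "aa 0 = 0 \<Longrightarrow> EE N $$ m = (if 0 < m then aa (nat m + N) - aa (nat m) else 0)"
proof -
  assume a0: "aa 0 = 0"
  have "EE N = fls_shift (int N) f_a - f_a - poly_T (pp N)"
    unfolding EE_def poly_T_qq by (simp add: algebra_simps fls_shifted_times_simps fls_mult_one)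
  then have "EE N $$ m = f_a $$ (m + int N) - f_a $$ m - poly_T (pp N) $$ m" by simp
  also have "\<dots> = (if 0 < m then aa (nat m + N) - aa (nat m) else 0)"
  proof (cases "0 < m")
    case True then show ?thesis by (simp add: f_a_nth poly_T_nth nat_add_distrib)
  next
    case False
    show ?thesis
    proof (cases "m + int N < 0")
      case True then show ?thesis using False by (simp add: f_a_nth poly_T_nth coeff_pp)
    next
      case False2: False
      have "nat (-m) \<le> N" using False2 by simp
      moreover have "N - nat (-m) = nat (m + int N)" using False2 False by simp
      ultimately show ?thesis using False False2 a0
        by (auto simp: f_a_nth poly_T_nth coeff_pp)
    qed
  qed
  finally show ?thesis .
qed

section \<open>The family of approximations\<close>

lemma EE_props:
  "EE (6*3^k) \<noteq> 0 \<and> fls_subdegree (EE (6*3^k)) = int (10*3^k)"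
proof -
  define N :: nat where "N = 6*3^k"
  define r :: nat where "r = 10*3^k"
  have P: "\<And>m. 1 \<le> m \<Longrightarrow> m < r \<Longrightarrow> fixpt (m + N) = fixpt m"
    and r0: "fixpt r = 0" and rN: "fixpt (r + N) \<noteq> 0"
    using period[of k] unfolding N_def r_def by auto
  have a0: "aa 0 = 0" by (simp add: aa_small)
  have rpos: "0 < r" unfolding r_def by simp
  have nz: "EE N $$ int r \<noteq> 0"
  proof -
    have "EE N $$ int r = aa (r + N) - aa r" using rpos by (simp add: EE_nth[OF a0])
    also have "\<dots> = of_nat (fixpt (r + N))" using r0 by (simp add: aa_def)
    also have "\<dots> \<noteq> 0" using rN fixpt_cases[of "r + N"] F3_nums(6) by auto
    finally show ?thesis .
  qed
  have below: "EE N $$ m = 0" if "m < int r" for m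
  proof (cases "0 < m")
    case True
    then have "1 \<le> nat m" "nat m < r" using that by auto
    then have "aa (nat m + N) = aa (nat m)" using P by (simp add: aa_def)
    then show ?thesis using True by (simp add: EE_nth[OF a0])
  qed (simp add: EE_nth[OF a0])
  have "EE N \<noteq> 0" using nz by auto
  moreover have "fls_subdegree (EE N) = int r" by (rule fls_subdegree_eqI[OF nz below])
  ultimately show ?thesis unfolding N_def r_def by simp
qed

lemma exists_k: "10 \<le> (d::nat) \<Longrightarrow> \<exists>k. 10*3^k \<le> d \<and> d < 30*3^k"
proof (induct d rule: less_induct)
  case (less d)
  show ?case
  proof (cases "d < 30")
    case True then show ?thesis using less.prems by (intro exI[of _ 0]) simp
  next
    case False
    then have "10 \<le> d div 3" "d div 3 < d" by auto
    then obtain k where k: "10*3^k \<le> d div 3" "d div 3 < 30*3^k" using less.hyps by blast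
    have "10*3^Suc k \<le> d" using k(1) by simp
    moreover have "d < 30*3^Suc k" using k(2) by simp
    ultimately show ?thesis by blast
  qed
qed

lemma sub_nonneg_diff:
  fixes f g :: "F3 fls"
  assumes "f - g \<noteq> 0" "f = 0 \<or> 0 < fls_subdegree f" "g = 0 \<or> 0 < fls_subdegree g"
  shows "0 < fls_subdegree (f - g)"
proof -
  consider "f = 0" | "g = 0" | "f \<noteq> 0" "g \<noteq> 0" by blast
  then show ?thesis
  proof cases
    case 1 then show ?thesis using assms by simp
  next
    case 2 then show ?thesis using assms by simp
  next
    case 3
    then have "0 < min (fls_subdegree f) (fls_subdegree g)" using assms by simp
    also have "\<dots> \<le> fls_subdegree (f - g)" by (rule fls_subdegree_minus[OF assms(1)])
    finally show ?thesis .
  qed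
qed

lemma main_bound:
  fixes P Q :: "F3 poly" and \<tau> :: real
  defines "W \<equiv> poly_T Q * f_a - poly_T P"
  assumes Q: "Q \<noteq> 0" and tau: "\<tau> > 2.81"
    and H: "W = 0 \<or> real_of_int (fls_subdegree W) > (\<tau> - 1) * real (degree Q)"
  shows "degree Q < 10"
proof (rule ccontr)
  assume "\<not> degree Q < 10"
  then have "10 \<le> degree Q" by simp
  then obtain k where k: "10*3^k \<le> degree Q" "degree Q < 30*3^k" using exists_k by blast
  define d where "d = degree Q"
  define N :: nat where "N = 6*3^Suc k"
  define p where "p = pp N"
  define q where "q = qq N"
  define E where "E = EE N"
  have EN: "E \<noteq> 0" "fls_subdegree E = int (10*3^Suc k)"
    using EE_props[of "Suc k"] unfolding E_def N_def by auto
  have qnz: "q \<noteq> 0" and dq: "degree q = N" unfolding q_def N_def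
    by (simp_all add: qq_nonzero degree_qq)
  have vq: "fls_subdegree (poly_T q) = - int N" using qnz dq by (simp add: poly_T_subdegree)
  have vQ: "fls_subdegree (poly_T Q) = - int d" using Q by (simp add: poly_T_subdegree d_def)
  have Qt: "poly_T Q \<noteq> 0" "poly_T q \<noteq> 0" using Q qnz by auto
  have ident: "poly_T (p * Q - P * q) = poly_T q * W - poly_T Q * E"
    unfolding W_def E_def EE_def p_def q_def poly_T_diff poly_T_mult by (simp add: algebra_simps)
  have K: "(3::real)^k > 0" by simp
  have "real (10*3^k) \<le> real d" "real d < real (30*3^k)" using k unfolding d_def
    by (simp_all only: of_nat_le_iff of_nat_less_iff)
  then have dk: "real d \<ge> 10 * 3^k" "real d < 30 * 3^k" by simp_all
  have Y: "poly_T Q * E \<noteq> 0" "0 < fls_subdegree (poly_T Q * E)"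
  proof -
    show "poly_T Q * E \<noteq> 0" using Qt EN by simp
    have "fls_subdegree (poly_T Q * E) = - int d + int (10*3^Suc k)" using Qt EN vQ by simp
    moreover have "int d < int (10*3^Suc k)" using k(2) unfolding d_def by (simp only: of_nat_less_iff) simp
    ultimately show "0 < fls_subdegree (poly_T Q * E)" by simp
  qed
  show False
  proof (cases "p * Q - P * q = 0")
    case False
    have lhs: "poly_T (p * Q - P * q) \<noteq> 0" using False by simp
    have lhsv: "fls_subdegree (poly_T (p * Q - P * q)) \<le> 0"
      using False by (simp add: poly_T_subdegree)
    have X: "poly_T q * W = 0 \<or> 0 < fls_subdegree (poly_T q * W)"
    proof (cases "W = 0")
      case False
      then have hv: "real_of_int (fls_subdegree W) > (\<tau> - 1) * real d" using H d_def by auto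
      have "(\<tau> - 1) * real d \<ge> (181/100) * real d" using tau by (intro mult_right_mono) auto
      moreover have "real N = 18 * 3^k" unfolding N_def by simp
      ultimately have "real_of_int (fls_subdegree W) > real N" using hv dk K by linarith
      then have "fls_subdegree W > int N" by linarith
      then show ?thesis using False Qt vq by simp
    qed simp
    have nz: "poly_T q * W - poly_T Q * E \<noteq> 0" using lhs unfolding ident .
    have "0 < fls_subdegree (poly_T q * W - poly_T Q * E)"
      by (rule sub_nonneg_diff[OF nz X]) (use Y in blast)
    then show False using lhsv unfolding ident by linarith
  next
    case True
    then have eq: "p * Q = P * q" by simp
    have cop: "coprime q p" unfolding p_def q_def N_def
      using coprime_pp_qq[of "Suc k"] by simp
    have "q dvd p * Q" using eq by simp
    then have "q dvd Q" using coprime_dvd_mult_right_iff[OF cop] by simp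
    then have "degree q \<le> degree Q" by (rule dvd_imp_degree_le[OF _ Q])
    then have Nd: "N \<le> d" using dq d_def by simp
    have e2: "poly_T q * W = poly_T Q * E" using ident True by simp
    then have Wnz: "W \<noteq> 0" using Y by auto
    have "fls_subdegree (poly_T q * W) = fls_subdegree (poly_T Q * E)" using e2 by simp
    then have "- int N + fls_subdegree W = - int d + int (10*3^Suc k)"
      using Qt EN Wnz vq vQ by simp
    then have vW: "real_of_int (fls_subdegree W) = 48 * 3^k - real d"
      unfolding N_def by simp
    have hv: "real_of_int (fls_subdegree W) > (\<tau> - 1) * real d" using H Wnz d_def by auto
    have "real N \<le> real d" using Nd by (simp only: of_nat_le_iff)
    moreover have "real N = 18 * 3^k" unfolding N_def by simp
    ultimately have NdR: "18 * 3^k \<le> real d" by simp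
    have h1: "(\<tau> - 1) * real d < 48 * 3^k - real d" using hv vW by simp
    have h2: "\<tau> * real d < 48 * 3^k" using h1 by (simp add: algebra_simps)
    have h3: "(281/100) * real d \<le> \<tau> * real d" using tau by (intro mult_right_mono) auto
    have h4: "(281/100) * (18 * 3^k) \<le> (281/100) * (real d)" using NdR by simp
    show False using h2 h3 h4 K by linarith
  qed
qed

lemma absT_poly: "Q \<noteq> 0 \<Longrightarrow> absT t (poly_T Q) = t powr real (degree Q)"
  by (simp add: absT_def poly_T_subdegree)

lemma finite_deg: "finite {p :: F3 poly. degree p \<le> D}"
proof -
  have "{p :: F3 poly. degree p \<le> D} \<subseteq> Poly ` {xs. set xs \<subseteq> UNIV \<and> length xs \<le> Suc D}"
  proof
    fix p :: "F3 poly" assume "p \<in> {p. degree p \<le> D}"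
    then have "length (coeffs p) \<le> Suc D"
      by (cases "p = 0") (simp_all add: length_coeffs_degree)
    then show "p \<in> Poly ` {xs. set xs \<subseteq> UNIV \<and> length xs \<le> Suc D}"
      by (intro image_eqI[of _ _ "coeffs p"]) simp_all
  qed
  moreover have "finite {xs :: F3 list. set xs \<subseteq> UNIV \<and> length xs \<le> Suc D}"
    by (rule finite_lists_length_le) simp
  ultimately show ?thesis by (meson finite_imageI finite_subset)
qed

lemma pair_facts:
  fixes P Q :: "F3 poly" and \<tau> t :: real
  defines "W \<equiv> poly_T Q * f_a - poly_T P"
  assumes t: "t > 1" and Q: "Q \<noteq> 0" and tau: "\<tau> > 2.81"
    and A: "absT t (f_a - poly_T P / poly_T Q) < absT t (poly_T Q) powr (- \<tau>)"
  shows "(W = 0 \<or> real_of_int (fls_subdegree W) > (\<tau> - 1) * real (degree Q))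
         \<and> degree P \<le> degree Q"
proof -
  define d where "d = degree Q"
  have Qt: "poly_T Q \<noteq> 0" using Q by simp
  have vQ: "fls_subdegree (poly_T Q) = - int d" using Q by (simp add: poly_T_subdegree d_def)
  have eqW: "f_a - poly_T P / poly_T Q = W / poly_T Q"
    unfolding W_def using Qt by (simp add: field_simps)
  have tp: "t > 0" using t by simp
  have R: "absT t (poly_T Q) powr (- \<tau>) = t powr (- (\<tau> * real d))"
    using Q tp by (simp add: absT_poly powr_powr d_def mult.commute)
  have H: "W = 0 \<or> real_of_int (fls_subdegree W) > (\<tau> - 1) * real d"
  proof (cases "W = 0")
    case False
    then have nz: "W / poly_T Q \<noteq> 0" using Qt by simp
    have v: "fls_subdegree (W / poly_T Q) = fls_subdegree W + int d"
      using False Qt vQ by (simp add: fls_divide_subdegree)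
    have A': "absT t (W / poly_T Q) < t powr (- (\<tau> * real d))" using A unfolding eqW R .
    have "t powr (- real_of_int (fls_subdegree W + int d)) < t powr (- (\<tau> * real d))"
      using A' nz v unfolding absT_def by simp
    then have "- real_of_int (fls_subdegree W + int d) < - (\<tau> * real d)"
      using t by (simp add: powr_less_cancel_iff)
    then show ?thesis by (simp add: algebra_simps)
  qed simp
  have taupos: "\<tau> - 1 \<ge> 0" using tau by simp
  have degP: "degree P \<le> d"
  proof (cases "P = 0")
    case False
    have Pt: "poly_T P \<noteq> 0" using False by simp
    have vPQ: "fls_subdegree (poly_T P / poly_T Q) = - int (degree P) + int d"
      using Pt Qt vQ False by (simp add: fls_divide_subdegree poly_T_subdegree)
    have nzPQ: "poly_T P / poly_T Q \<noteq> 0" using Pt Qt by simp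
    have eqP: "poly_T P / poly_T Q = f_a - W / poly_T Q" using eqW by (simp add: algebra_simps)
    have vf: "0 \<le> fls_subdegree f_a" unfolding f_a_def by (rule fls_subdegree_fls_to_fps_gt0)
    have "0 \<le> fls_subdegree (poly_T P / poly_T Q)"
    proof (cases "W = 0")
      case True then show ?thesis using eqP vf by simp
    next
      case False
      have hv: "real_of_int (fls_subdegree W) > (\<tau> - 1) * real d" using H False by simp
      have "(\<tau> - 1) * real d \<ge> 0" using taupos by simp
      then have "fls_subdegree W > 0" using hv by linarith
      then have "0 \<le> fls_subdegree (W / poly_T Q)"
        using False Qt vQ by (simp add: fls_divide_subdegree)
      moreover have "f_a - W / poly_T Q \<noteq> 0" using nzPQ eqP by simp
      ultimately show ?thesis unfolding eqP using fls_subdegree_minus[of f_a "W / poly_T Q"] vf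
        by linarith
    qed
    then show ?thesis unfolding vPQ by simp
  qed simp
  show ?thesis using H degP d_def by simp
qed

lemma upper_finite:
  fixes t \<tau> :: real
  assumes t: "t > 1" and tau: "\<tau> > 2.81"
  shows "finite {(P, Q). Q \<noteq> 0 \<and>
      absT t (f_a - poly_T P / poly_T Q) < absT t (poly_T Q) powr (- \<tau>)}"
proof (rule finite_subset)
  show "{(P, Q). Q \<noteq> 0 \<and> absT t (f_a - poly_T P / poly_T Q) < absT t (poly_T Q) powr (- \<tau>)}
    \<subseteq> {p. degree p \<le> 9} \<times> {p. degree p \<le> 9}"
  proof
    fix x assume "x \<in> {(P, Q). Q \<noteq> 0 \<and> absT t (f_a - poly_T P / poly_T Q) < absT t (poly_T Q) powr (- \<tau>)}"
    then obtain P Q where x: "x = (P, Q)" and Q: "Q \<noteq> 0"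
      and A: "absT t (f_a - poly_T P / poly_T Q) < absT t (poly_T Q) powr (- \<tau>)" by blast
    note pf = pair_facts[OF t Q tau A]
    have "degree Q < 10" using main_bound[OF Q tau] pf by blast
    then show "x \<in> {p. degree p \<le> 9} \<times> {p. degree p \<le> 9}" using pf x by simp
  qed
  show "finite ({p :: F3 poly. degree p \<le> 9} \<times> {p :: F3 poly. degree p \<le> 9})"
    by (intro finite_cartesian_product finite_deg)
qed

lemma lower_pair:
  fixes t :: real
  assumes t: "t > 1"
  shows "absT t (f_a - poly_T (pp (6*3^k)) / poly_T (qq (6*3^k)))
         < absT t (poly_T (qq (6*3^k))) powr (- 2.66)"
proof -
  define N :: nat where "N = 6*3^k"
  have qnz: "qq N \<noteq> 0" and dq: "degree (qq N) = N" unfolding N_def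
    by (simp_all add: qq_nonzero degree_qq)
  have Qt: "poly_T (qq N) \<noteq> 0" using qnz by simp
  have vQ: "fls_subdegree (poly_T (qq N)) = - int N" using qnz dq by (simp add: poly_T_subdegree)
  have EN: "EE N \<noteq> 0" "fls_subdegree (EE N) = int (10*3^k)"
    using EE_props[of k] unfolding N_def by auto
  have eq: "f_a - poly_T (pp N) / poly_T (qq N) = EE N / poly_T (qq N)"
    unfolding EE_def using Qt by (simp add: field_simps)
  have v: "fls_subdegree (EE N / poly_T (qq N)) = int (10*3^k) + int N"
    using EN Qt vQ by (simp add: fls_divide_subdegree)
  have nz: "EE N / poly_T (qq N) \<noteq> 0" using EN Qt by simp
  have tp: "t > 0" using t by simp
  have L: "absT t (f_a - poly_T (pp N) / poly_T (qq N)) = t powr (- real (16*3^k))"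
    unfolding eq absT_def using nz v unfolding N_def by simp
  have R: "absT t (poly_T (qq N)) powr (- 2.66) = t powr (- (2.66 * real N))"
    using qnz tp dq by (simp add: absT_poly powr_powr algebra_simps)
  have "- real (16*3^k) < - (2.66 * real N)" unfolding N_def by simp
  then have "t powr (- real (16*3^k)) < t powr (- (2.66 * real N))"
    using t by (simp add: powr_less_cancel_iff)
  then show ?thesis using L R unfolding N_def by simp
qed

theorem proposition5p7:
  fixes t :: real
  assumes "t > 1"
  shows "ereal 2.66 \<le> irr_exp t f_a \<and> irr_exp t f_a \<le> ereal 2.81"
proof
  define S where "S = {\<tau>. infinite {(P, Q). Q \<noteq> 0 \<and>
      absT t (f_a - poly_T P / poly_T Q) < absT t (poly_T Q) powr (- \<tau>)}}"
  have irr: "irr_exp t f_a = Sup (ereal ` S)" unfolding irr_exp_def S_def ..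
  have "2.66 \<in> S"
  proof -
    define g where "g = (\<lambda>k::nat. (pp (6*3^k), qq (6*3^k)))"
    have inj: "inj g"
    proof (rule injI)
      fix a b assume "g a = g b"
      then have "degree (qq (6*3^a)) = degree (qq (6*3^b))" unfolding g_def by simp
      then have "(6::nat)*3^a = 6*3^b" by (simp add: degree_qq)
      then show "a = b" by simp
    qed
    have sub: "range g \<subseteq> {(P, Q). Q \<noteq> 0 \<and>
      absT t (f_a - poly_T P / poly_T Q) < absT t (poly_T Q) powr (- 2.66)}"
      using lower_pair[OF assms] by (auto simp: g_def qq_nonzero)
    have "infinite (range g)" using inj by (simp add: infinite_UNIV_char_0 range_inj_infinite)
    then show ?thesis unfolding S_def using sub infinite_super by blast
  qed
  then show "ereal 2.66 \<le> irr_exp t f_a" unfolding irr by (intro Sup_upper imageI)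
  have "\<tau> \<le> 2.81" if "\<tau> \<in> S" for \<tau>
  proof (rule ccontr)
    assume "\<not> \<tau> \<le> 2.81"
    then have "\<tau> > 2.81" by simp
    then show False using upper_finite[OF assms] that unfolding S_def by blast
  qed
  then show "irr_exp t f_a \<le> ereal 2.81" unfolding irr by (intro Sup_least) auto
qed

end
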